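(* Let $(\mathsf{E},\mathcal{F},\mu)$ be a probability space and let $P$ be a $\mu$-invariant Markov kernel on $\mathsf{E}$. Let $\Phi:\mathrm{L}^{2}(\mu)\to[0,\infty]$ satisfy, for all $f\in\mathrm{L}^{2}(\mu)$, $c>0$ and $n\in\mathbb{N}$, \[ \Phi(cf)=c^{2}\Phi(f),\qquad\Phi(P^{n}f)\le\Phi(f),\qquad\|f-\mu(f)\|_{2}^{2}\le a\,\Phi(f-\mu(f)), \] where $a:=\sup_{f\in\mathrm{L}_{0}^{2}(\mu)\setminus\{0\}}\|f\|_{2}^{2}/\Phi(f)\in(0,\infty)$. Suppose that $\beta:(0,\infty)\to[0,\infty)$ is decreasing with $\beta(s)\downarrow0$ as $s\to\infty$ and that for all $f\in\mathrm{L}_{0}^{2}(\mu)$ and all $s>0$, \[ \|f\|_{2}^{2}\le s\,\mathcal{E}(P^{*}P,f)+\beta(s)\Phi(f). \] Let $K(u):=u\beta(1/u)$ for $u>0$, $K(0):=0$, let $K^{*}(v):=\sup_{u\ge0}\{uv-K(u)\}$ for $v\ge0$, and let $F_{a}(x):=\int_{x}^{a}\frac{\mathrm{d}v}{K^{*}(v)}$ for $x\in(0,a]$. Then $F_{a}$ is continuous, convex and strictly decreasing with $F_{a}(x)\to\infty$ as $x\downarrow0$, so it has an inverse $F_{a}^{-1}:(0,\infty)\to(0,a)$, and for every $f\in\mathrm{L}_{0}^{2}(\mu)$ with $0<\Phi(f)<\infty$ and every $n\in\mathbb{N}$, \[ \|P^{n}f\|_{2}^{2}\le\Phi(f)\,F_{a}^{-1}(n).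 \]
   Context: $\mathrm{L}^{2}(\mu)$ is the real Hilbert space of square-integrable functions with inner product $\langle f,g\rangle=\int fg\,\mathrm{d}\mu$ and norm $\|\cdot\|_{2}$; $\mathrm{L}_{0}^{2}(\mu)=\{f\in\mathrm{L}^{2}(\mu):\mu(f)=0\}$. $P$ acts on functions by $Pf(x)=\int P(x,\mathrm{d}y)f(y)$, and $P^{*}$ is its adjoint in $\mathrm{L}^{2}(\mu)$. For a bounded operator $T$ on $\mathrm{L}^{2}(\mu)$, the Dirichlet form is $\mathcal{E}(T,f):=\langle(\mathrm{Id}-T)f,f\rangle$. $\mathbb{N}=\{1,2,\dots\}$. *)

theory Defs
  imports "HOL-Probability.Probability"
begin

definition L2 :: "'a measure \<Rightarrow> ('a \<Rightarrow> real) set" where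
  "L2 M = {f. f \<in> borel_measurable M \<and> integrable M (\<lambda>x. (f x)\<^sup>2)}"

definition inner_L2 :: "'a measure \<Rightarrow> ('a \<Rightarrow> real) \<Rightarrow> ('a \<Rightarrow> real) \<Rightarrow> real" where
  "inner_L2 M f g = (\<integral>x. f x * g x \<partial>M)"

definition norm2_L2 :: "'a measure \<Rightarrow> ('a \<Rightarrow> real) \<Rightarrow> real" where
  "norm2_L2 M f = inner_L2 M f f"

definition mean :: "'a measure \<Rightarrow> ('a \<Rightarrow> real) \<Rightarrow> real" where
  "mean M f = (\<integral>x. f x \<partial>M)"

definition L2_0 :: "'a measure \<Rightarrow> ('a \<Rightarrow> real) set" where
  "L2_0 M = {f \<in> L2 M. mean M f = 0}"

definition invariant_markov_kernel :: "'a measure \<Rightarrow> ('a \<Rightarrow> 'a measure) \<Rightarrow> bool" where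
  "invariant_markov_kernel M P \<longleftrightarrow> P \<in> M \<rightarrow>\<^sub>M prob_algebra M \<and> bind M P = M"

definition kop :: "('a \<Rightarrow> 'a measure) \<Rightarrow> ('a \<Rightarrow> real) \<Rightarrow> ('a \<Rightarrow> real)" where
  "kop P f = (\<lambda>x. \<integral>y. f y \<partial>(P x))"

definition is_L2_adjoint :: "'a measure \<Rightarrow> (('a \<Rightarrow> real) \<Rightarrow> ('a \<Rightarrow> real))
    \<Rightarrow> (('a \<Rightarrow> real) \<Rightarrow> ('a \<Rightarrow> real)) \<Rightarrow> bool" where
  "is_L2_adjoint M T Q \<longleftrightarrow>
     (\<forall>g \<in> L2 M. Q g \<in> L2 M \<and> (\<forall>f \<in> L2 M. inner_L2 M (Q g) f = inner_L2 M g (T f)))"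

definition dirichlet :: "'a measure \<Rightarrow> (('a \<Rightarrow> real) \<Rightarrow> ('a \<Rightarrow> real)) \<Rightarrow> ('a \<Rightarrow> real) \<Rightarrow> real" where
  "dirichlet M T f = inner_L2 M (\<lambda>x. f x - T f x) f"

definition Kfun :: "(real \<Rightarrow> real) \<Rightarrow> real \<Rightarrow> real" where
  "Kfun \<beta> u = (if u = 0 then 0 else u * \<beta> (1 / u))"

text \<open>Convex conjugate K*(v) = sup_{u>=0} (u v - K(u)), valued in [0,infinity]
  (the supremum is >= 0 because of u = 0).\<close>
definition Kstar :: "(real \<Rightarrow> real) \<Rightarrow> real \<Rightarrow> ennreal" where
  "Kstar \<beta> v = (SUP u \<in> {0..}. ennreal (u * v - Kfun \<beta> u))"

text \<open>F_a(x) = integral from x to a of dv / K*(v) (with 1/infinity = 0, 1/0 = infinity).\<close>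
definition Fa :: "(real \<Rightarrow> real) \<Rightarrow> real \<Rightarrow> real \<Rightarrow> ennreal" where
  "Fa \<beta> a x = (\<integral>\<^sup>+ v. indicator {x..a} v * inverse (Kstar \<beta> v) \<partial>lborel)"

end

theory Submission
  imports Defs
begin

locale wb =
  fixes \<beta> :: "real \<Rightarrow> real" and a :: real
  assumes bnn: "\<And>s. s > 0 \<Longrightarrow> \<beta> s \<ge> 0"
    and bdec: "\<And>s t. 0 < s \<Longrightarrow> s \<le> t \<Longrightarrow> \<beta> t \<le> \<beta> s"
    and blim: "(\<beta> \<longlongrightarrow> 0) at_top"
    and apos: "0 < a"
    and big: "\<And>v. 0 < v \<Longrightarrow> v < a \<Longrightarrow> \<exists>s>0. v \<le> \<beta> s"
begin

lemma Kstar_mono: assumes vw: "v \<le> w" shows "Kstar \<beta> v \<le> Kstar \<beta> w"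
  unfolding Kstar_def
proof (rule SUP_mono)
  fix u :: real assume u: "u \<in> {0..}"
  then have "u * v \<le> u * w" using vw by (intro mult_left_mono) auto
  then show "\<exists>m\<in>{0..}. ennreal (u * v - Kfun \<beta> u) \<le> ennreal (m * w - Kfun \<beta> m)"
    using u by (intro bexI[of _ u] ennreal_leI) auto
qed

lemma ennreal_inverse_antimono: fixes p q :: ennreal assumes "p \<le> q" shows "inverse q \<le> inverse p"
proof (cases "p = 0 \<or> q = top")
  case True then show ?thesis by auto
next
  case False
  then have p0: "p \<noteq> 0" and qt: "q < top" by (auto simp: top.not_eq_extremum)
  have pt: "p < top" using le_less_trans[OF assms qt] .
  obtain r where r0: "p = ennreal r" "0 \<le> r" using pt by (cases p) auto
  then have r: "p = ennreal r" "r > 0" using p0 by auto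
  obtain t where t: "q = ennreal t" "0 \<le> t" using qt by (cases q) auto
  have "r \<le> t" using assms r t by (simp add: ennreal_le_iff)
  then show ?thesis using r t by (simp add: inverse_ennreal le_imp_inverse_le ennreal_leI)
qed

lemma Kstar_pos: assumes v: "0 < v" shows "0 < Kstar \<beta> v"
proof -
  have "\<forall>\<^sub>F s in at_top. \<beta> s < v" using order_tendstoD(2)[OF blim v] .
  then obtain N where N: "\<And>s. s \<ge> N \<Longrightarrow> \<beta> s < v" by (auto simp: eventually_at_top_linorder)
  define s where "s = max N 1"
  have s: "s > 0" "\<beta> s < v" using N unfolding s_def by auto
  define u where "u = 1 / s"
  have u: "u > 0" "1 / u = s" using s unfolding u_def by auto
  have "u * v - Kfun \<beta> u = u * (v - \<beta> s)" unfolding Kfun_def using u by (simp add: algebra_simps)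
  also have "\<dots> > 0" using u s by simp
  finally have "0 < ennreal (u * v - Kfun \<beta> u)" by simp
  also have "\<dots> \<le> Kstar \<beta> v" unfolding Kstar_def using u by (intro SUP_upper) auto
  finally show ?thesis .
qed

lemma Kstar_bound:
  assumes s0: "0 < s0" and v: "0 \<le> v" "v \<le> \<beta> s0"
  shows "Kstar \<beta> v \<le> ennreal (v / s0)"
  unfolding Kstar_def
proof (rule SUP_least, rule ennreal_leI)
  fix u :: real assume "u \<in> {0..}"
  then have u: "u \<ge> 0" by auto
  show "u * v - Kfun \<beta> u \<le> v / s0"
  proof (cases "u = 0")
    case True then show ?thesis using v s0 by (simp add: Kfun_def)
  next
    case False
    then have u': "u > 0" using u by auto
    have K: "Kfun \<beta> u = u * \<beta> (1/u)" using False by (simp add: Kfun_def)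
    show ?thesis
    proof (cases "u \<le> 1 / s0")
      case True
      have "u * v \<le> (1/s0) * v" using True v by (intro mult_right_mono) auto
      moreover have "0 \<le> u * \<beta> (1/u)" using u' bnn[of "1/u"] by auto
      ultimately show ?thesis using K by simp
    next
      case False
      then have "1/u < s0" using u' s0 by (simp add: field_simps)
      then have "\<beta> s0 \<le> \<beta> (1/u)" using u' by (intro bdec) auto
      then have "u * v \<le> u * \<beta> (1/u)" using v u' by (intro mult_left_mono) auto
      moreover have "0 \<le> v / s0" using v s0 by simp
      ultimately show ?thesis using K by linarith
    qed
  qed
qed

lemma Kstar_fin: assumes "0 < v" "v < a" shows "Kstar \<beta> v < \<infinity>"
proof -
  obtain s where "s > 0" "v \<le> \<beta> s" using big[OF assms] by auto
  then have "Kstar \<beta> v \<le> ennreal (v / s)" using assms by (intro Kstar_bound) auto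
  then show ?thesis using le_less_trans by fastforce
qed

lemma g_meas: "(\<lambda>v. inverse (Kstar \<beta> v)) \<in> borel_measurable borel"
proof (rule borel_measurableI_less)
  fix y :: ennreal
  have "is_interval {x. inverse (Kstar \<beta> x) < y}"
    unfolding is_interval_1
  proof (clarsimp)
    fix p q x assume "inverse (Kstar \<beta> p) < y" "p \<le> x"
    moreover have "inverse (Kstar \<beta> x) \<le> inverse (Kstar \<beta> p)"
      using Kstar_mono[OF \<open>p \<le> x\<close>] by (rule ennreal_inverse_antimono)
    ultimately show "inverse (Kstar \<beta> x) < y" by auto
  qed
  then show "{x \<in> space borel. inverse (Kstar \<beta> x) < y} \<in> sets borel"
    by (simp add: real_interval_borel_measurable)
qed

lemma g_fin: "0 < v \<Longrightarrow> inverse (Kstar \<beta> v) < \<infinity>"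
  using Kstar_pos[of v] by (simp add: top.not_eq_extremum[symmetric])

lemma g_pos: "0 < v \<Longrightarrow> v < a \<Longrightarrow> 0 < inverse (Kstar \<beta> v)"
  using Kstar_fin[of v] by (simp add: ennreal_inverse_positive)


lemma g_meas_l[measurable]: "(\<lambda>v. inverse (Kstar \<beta> v)) \<in> borel_measurable lborel"
  using g_meas by simp

definition I :: "real \<Rightarrow> real \<Rightarrow> ennreal" where
  "I x y = (\<integral>\<^sup>+v. indicator {x..<y} v * inverse (Kstar \<beta> v) \<partial>lborel)"

lemma Fa_split: assumes "x \<le> y" "y \<le> a" shows "Fa \<beta> a x = I x y + Fa \<beta> a y"
proof -
  have e: "\<And>v. indicator {x..a} v * inverse (Kstar \<beta> v) =
      indicator {x..<y} v * inverse (Kstar \<beta> v) + indicator {y..a} v * inverse (Kstar \<beta> v)"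
    using assms by (auto simp: indicator_def)
  show ?thesis unfolding Fa_def I_def e
    by (rule nn_integral_add) auto
qed

lemma Icm: assumes "x \<le> y" shows "(\<integral>\<^sup>+v. indicator {x..<y} v * c \<partial>lborel) = c * ennreal (y - x)"
proof -
  have "(\<lambda>v. indicator {x..<y} v * c) = (\<lambda>v. c * indicator {x..<y} v)" by (auto simp: mult.commute)
  then show ?thesis using assms by (simp add: nn_integral_cmult_indicator)
qed

lemma I_bounds: assumes x: "0 < x" and xy: "x \<le> y"
  shows "inverse (Kstar \<beta> y) * ennreal (y - x) \<le> I x y \<and> I x y \<le> inverse (Kstar \<beta> x) * ennreal (y - x)"
proof
  show "inverse (Kstar \<beta> y) * ennreal (y - x) \<le> I x y"
    unfolding I_def Icm[OF xy, symmetric]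
    by (intro nn_integral_mono) (auto simp: indicator_def intro!: ennreal_inverse_antimono Kstar_mono)
  show "I x y \<le> inverse (Kstar \<beta> x) * ennreal (y - x)"
    unfolding I_def Icm[OF xy, symmetric]
    by (intro nn_integral_mono) (auto simp: indicator_def intro!: ennreal_inverse_antimono Kstar_mono)
qed

lemma Fa_a: "Fa \<beta> a a = 0"
proof -
  have "AE v in lborel. indicator {a..a} v * inverse (Kstar \<beta> v) = (0::ennreal)"
    using AE_lborel_singleton[of a] by eventually_elim auto
  from nn_integral_cong_AE[OF this] show ?thesis unfolding Fa_def by simp
qed

lemma Fa_I: "0 < x \<Longrightarrow> x \<le> a \<Longrightarrow> Fa \<beta> a x = I x a"
  using Fa_split[of x a] Fa_a by simp

lemma I_fin: assumes "0 < x" "x \<le> y" shows "I x y < \<infinity>"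
proof -
  have "I x y \<le> inverse (Kstar \<beta> x) * ennreal (y - x)" using I_bounds[OF assms] by auto
  also have "\<dots> < \<infinity>" using g_fin[OF assms(1)] by (simp add: ennreal_mult_less_top)
  finally show ?thesis .
qed

lemma Fa_fin: "0 < x \<Longrightarrow> x \<le> a \<Longrightarrow> Fa \<beta> a x < \<infinity>"
  using Fa_I I_fin by simp

definition G where "G x = enn2real (Fa \<beta> a x)"
definition h where "h v = enn2real (inverse (Kstar \<beta> v))"

lemma G_split: "0 < x \<Longrightarrow> x \<le> y \<Longrightarrow> y \<le> a \<Longrightarrow> G x = enn2real (I x y) + G y"
  unfolding G_def using Fa_split[of x y] I_fin[of x y] Fa_fin[of y]
  by (simp add: enn2real_plus)

lemma h_anti: "0 < v \<Longrightarrow> v \<le> w \<Longrightarrow> h w \<le> h v"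
  unfolding h_def using g_fin[of v] by (intro enn2real_mono ennreal_inverse_antimono Kstar_mono) auto

lemma h_pos: "0 < v \<Longrightarrow> v < a \<Longrightarrow> 0 < h v"
  unfolding h_def using g_pos g_fin by (simp add: enn2real_positive_iff)

lemma h_nn: "0 \<le> h v" unfolding h_def by simp

lemma G_slope: assumes "0 < x" "x \<le> y" "y \<le> a"
  shows "(y - x) * h y \<le> G x - G y \<and> G x - G y \<le> (y - x) * h x"
proof -
  have d: "G x - G y = enn2real (I x y)" using G_split[OF assms] by simp
  have fin: "I x y < \<infinity>" using I_fin assms by auto
  have u: "inverse (Kstar \<beta> x) * ennreal (y - x) < \<infinity>"
    using g_fin[of x] assms by (simp add: ennreal_mult_less_top)
  have l: "enn2real (inverse (Kstar \<beta> y) * ennreal (y - x)) \<le> enn2real (I x y)"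
    using I_bounds[of x y] assms fin by (intro enn2real_mono) auto
  have r: "enn2real (I x y) \<le> enn2real (inverse (Kstar \<beta> x) * ennreal (y - x))"
    using I_bounds[of x y] assms u by (intro enn2real_mono) auto
  show ?thesis using l r d assms unfolding h_def by (simp add: enn2real_mult mult.commute)
qed

lemma G_strict: assumes "0 < x" "x < y" "y \<le> a" shows "G y < G x"
proof -
  define m where "m = (x + y) / 2"
  have m: "x < m" "m < y" using assms unfolding m_def by auto
  have "0 < (m - x) * h m" using m assms h_pos[of m] by auto
  also have "\<dots> \<le> G x - G m" using G_slope[of x m] m assms by auto
  finally have 1: "G m < G x" by simp
  have "0 \<le> (y - m) * h y" using m h_nn by auto
  also have "\<dots> \<le> G m - G y" using G_slope[of m y] m assms by auto
  finally show ?thesis using 1 by simp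
qed

lemma G_conv_aux: assumes "0 < x" "x \<le> y" "y \<le> a" "0 \<le> t" "t \<le> 1"
  shows "G ((1 - t) * x + t * y) \<le> (1 - t) * G x + t * G y"
proof -
  define m where "m = (1 - t) * x + t * y"
  have tt: "t * x \<le> t * y" "(1 - t) * x \<le> (1 - t) * y" using assms by (auto intro: mult_left_mono)
  have "m = x + (t * y - t * x)" "m = y - ((1 - t) * y - (1 - t) * x)" unfolding m_def by (simp_all add: algebra_simps)
  then have mx: "x \<le> m" and my: "m \<le> y" using tt by linarith+
  have s1: "(m - x) * h m \<le> G x - G m" using G_slope[of x m] mx my assms by auto
  have s2: "G m - G y \<le> (y - m) * h m" using G_slope[of m y] mx my assms by auto
  have A: "(1 - t) * ((m - x) * h m) \<le> (1 - t) * (G x - G m)"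
    using s1 assms by (intro mult_left_mono) auto
  have B: "t * (G m - G y) \<le> t * ((y - m) * h m)"
    using s2 assms by (intro mult_left_mono) auto
  have C: "(1 - t) * ((m - x) * h m) = t * ((y - m) * h m)"
    unfolding m_def by (simp add: algebra_simps)
  have D: "(1 - t) * G x + t * G y - G m = (1 - t) * (G x - G m) - t * (G m - G y)"
    by (simp add: algebra_simps)
  show ?thesis using A B C D unfolding m_def[symmetric] by linarith
qed

lemma G_convex: "convex_on {0<..a} G"
proof (rule convex_onI)
  show "convex {0<..a}" by simp
  fix t x y :: real assume t: "0 < t" "t < 1" and x: "x \<in> {0<..a}" and y: "y \<in> {0<..a}"
  show "G ((1 - t) *\<^sub>R x + t *\<^sub>R y) \<le> (1 - t) * G x + t * G y"
  proof (cases "x \<le> y")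
    case True then show ?thesis using G_conv_aux[of x y t] t x y by simp
  next
    case False
    then have "G ((1 - (1 - t)) * y + (1 - t) * x) \<le> (1 - (1 - t)) * G y + (1 - t) * G x"
      using G_conv_aux[of y x "1 - t"] t x y by simp
    then show ?thesis by (simp add: algebra_simps)
  qed
qed

lemma G_lip: assumes "0 < c" "c \<le> x" "c \<le> y" "x \<le> a" "y \<le> a"
  shows "\<bar>G x - G y\<bar> \<le> \<bar>x - y\<bar> * h c"
proof (cases "x \<le> y")
  case True
  have "0 \<le> (y - x) * h y" using True h_nn by simp
  also have "\<dots> \<le> G x - G y" using G_slope[of x y] True assms by auto
  finally have 1: "0 \<le> G x - G y" .
  have "G x - G y \<le> (y - x) * h x" using G_slope[of x y] True assms by auto
  also have "\<dots> \<le> (y - x) * h c" using h_anti[of c x] assms True by (intro mult_left_mono) auto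
  finally show ?thesis using 1 True by simp
next
  case False
  have "0 \<le> (x - y) * h x" using False h_nn by simp
  also have "\<dots> \<le> G y - G x" using G_slope[of y x] False assms by auto
  finally have 1: "0 \<le> G y - G x" .
  have "G y - G x \<le> (x - y) * h y" using G_slope[of y x] False assms by auto
  also have "\<dots> \<le> (x - y) * h c" using h_anti[of c y] assms False by (intro mult_left_mono) auto
  finally show ?thesis using 1 False by simp
qed

lemma G_cont: "continuous_on {0<..a} G"
  unfolding continuous_on_iff
proof (intro ballI allI impI)
  fix x e :: real assume x: "x \<in> {0<..a}" and e: "0 < e"
  define c where "c = x / 2"
  define L where "L = h c + 1"
  have c: "0 < c" "c \<le> x" using x unfolding c_def by auto
  have L: "0 < L" unfolding L_def using h_nn[of c] by simp
  define d where "d = min c (e / L)"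
  have d: "0 < d" unfolding d_def using c L e by auto
  show "\<exists>d>0. \<forall>x'\<in>{0<..a}. dist x' x < d \<longrightarrow> dist (G x') (G x) < e"
  proof (intro exI[of _ d] conjI ballI impI d)
    fix x' assume x': "x' \<in> {0<..a}" and dx: "dist x' x < d"
    have "\<bar>x' - x\<bar> < c" using dx unfolding d_def dist_real_def by auto
    then have "- (x' - x) < c" by (simp only: abs_less_iff)
    then have "c \<le> x'" unfolding c_def by linarith
    then have "\<bar>G x' - G x\<bar> \<le> \<bar>x' - x\<bar> * h c" using G_lip[of c x' x] c x x' by auto
    also have "\<dots> \<le> \<bar>x' - x\<bar> * L" unfolding L_def by (intro mult_left_mono) auto
    also have "\<dots> < (e / L) * L"
      using dx L unfolding d_def dist_real_def by (intro mult_strict_right_mono) auto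
    also have "\<dots> = e" using L by simp
    finally show "dist (G x') (G x) < e" unfolding dist_real_def .
  qed
qed


lemma G_step: assumes w: "0 < w" "w \<le> v" "v \<le> a" and K: "Kstar \<beta> v \<le> ennreal (v - w)"
  shows "G v + 1 \<le> G w"
proof -
  have Kp: "0 < Kstar \<beta> v" using Kstar_pos w by auto
  then have "0 < ennreal (v - w)" using K by (rule less_le_trans)
  then have d: "0 < v - w" by (simp add: ennreal_less_zero_iff)
  have "1 = inverse (ennreal (v - w)) * ennreal (v - w)"
    using d by (simp add: inverse_ennreal ennreal_mult[symmetric])
  also have "\<dots> \<le> inverse (Kstar \<beta> v) * ennreal (v - w)"
    using K by (intro mult_right_mono ennreal_inverse_antimono) auto
  also have "\<dots> \<le> I w v" using I_bounds[of w v] w by auto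
  finally have I1: "1 \<le> I w v" .
  have If: "I w v < top" using I_fin[of w v] w by simp
  have "1 \<le> enn2real (I w v)"
    using enn2real_mono[OF I1 If] by simp
  then show ?thesis using G_split[of w v] w by simp
qed

lemma Fa_big: "\<exists>X>0. X \<le> a / 2 \<and> (\<forall>x. 0 < x \<longrightarrow> x < X \<longrightarrow> ennreal r < Fa \<beta> a x)"
proof -
  obtain s0 where s0: "s0 > 0" "a / 2 \<le> \<beta> s0" using big[of "a/2"] apos by auto
  have low: "ennreal (s0 * ln (a/2) - s0 * ln x) \<le> Fa \<beta> a x" if x: "0 < x" "x \<le> a/2" for x
  proof -
    have eq: "(\<integral>\<^sup>+v. ennreal (s0 / v) * indicator {x..a/2} v \<partial>lborel) = ennreal (s0 * ln (a/2) - s0 * ln x)"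
    proof (rule nn_integral_FTC_Icc)
      show "(\<lambda>v. s0 / v) \<in> borel_measurable borel" by measurable
      show "((\<lambda>v. s0 * ln v) has_real_derivative s0 / v) (at v)" if "v \<in> {x..a/2}" for v
        using that x by (auto intro!: derivative_eq_intros simp: field_simps)
      show "0 \<le> s0 / v" if "v \<in> {x..a/2}" for v using that x s0 by auto
    qed (use x in auto)
    have mono: "(\<integral>\<^sup>+v. ennreal (s0 / v) * indicator {x..a/2} v \<partial>lborel) \<le> Fa \<beta> a x"
      unfolding Fa_def
    proof (rule nn_integral_mono)
      fix v :: real
      show "ennreal (s0 / v) * indicator {x..a/2} v \<le> indicator {x..a} v * inverse (Kstar \<beta> v)"
      proof (cases "v \<in> {x..a/2}")
        case True
        then have v: "0 < v" "v \<le> a/2" "x \<le> v" using x by auto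
        have "Kstar \<beta> v \<le> ennreal (v / s0)" using s0 v by (intro Kstar_bound) auto
        then have "inverse (ennreal (v / s0)) \<le> inverse (Kstar \<beta> v)" by (rule ennreal_inverse_antimono)
        moreover have "inverse (ennreal (v / s0)) = ennreal (s0 / v)" using v s0 by (simp add: inverse_ennreal)
        ultimately show ?thesis using True v apos by (auto simp: indicator_def)
      qed auto
    qed
    from mono show ?thesis unfolding eq .
  qed
  define z where "z = (\<bar>r\<bar> + 1) / s0"
  have z: "0 < z" unfolding z_def using s0 by auto
  define X where "X = (a/2) * exp (- z)"
  have X: "0 < X" unfolding X_def using apos by auto
  have "exp (- z) \<le> 1" using z by simp
  then have X2: "X \<le> a/2" unfolding X_def using apos by (simp add: mult_left_le)
  have "ln X = ln (a/2) + ln (exp (- z))" unfolding X_def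
    by (rule ln_mult_pos) (use apos in auto)
  then have lnX: "ln X = ln (a/2) - (\<bar>r\<bar> + 1) / s0" unfolding z_def by simp
  show ?thesis
  proof (intro exI[of _ X] conjI X X2 allI impI)
    fix x assume x: "0 < x" "x < X"
    then have "ln x < ln X" by simp
    then have "(\<bar>r\<bar> + 1) / s0 < ln (a/2) - ln x" using lnX by simp
    then have "\<bar>r\<bar> + 1 < s0 * (ln (a/2) - ln x)" using s0 by (simp add: field_simps)
    then have "r < s0 * ln (a/2) - s0 * ln x" by (simp add: algebra_simps)
    then have "ennreal r < ennreal (s0 * ln (a/2) - s0 * ln x)"
      by (intro ennreal_lessI) (use \<open>\<bar>r\<bar> + 1 < s0 * (ln (a/2) - ln x)\<close> in \<open>simp add: algebra_simps\<close>)
    also have "\<dots> \<le> Fa \<beta> a x" using low[of x] x X2 by auto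
    finally show "ennreal r < Fa \<beta> a x" .
  qed
qed

lemma Fa_lim: "((Fa \<beta> a) \<longlongrightarrow> \<infinity>) (at_right 0)"
proof (rule order_tendstoI)
  fix b :: ennreal assume "b < \<infinity>"
  then obtain r where r: "b = ennreal r" by (cases b) auto
  obtain X where X: "X > 0" "\<And>x. 0 < x \<Longrightarrow> x < X \<Longrightarrow> ennreal r < Fa \<beta> a x" using Fa_big[of r] by auto
  show "\<forall>\<^sub>F x in at_right 0. b < Fa \<beta> a x"
    unfolding eventually_at_right_field r using X by auto
qed auto

lemma G_big: "\<exists>c. 0 < c \<and> c < a \<and> t < G c"
proof -
  obtain X where X: "X > 0" "X \<le> a/2" "\<And>x. 0 < x \<Longrightarrow> x < X \<Longrightarrow> ennreal t < Fa \<beta> a x"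
    using Fa_big[of t] by auto
  define c where "c = X / 2"
  have c: "0 < c" "c < X" "c < a" using X apos unfolding c_def by auto
  have f: "Fa \<beta> a c < \<infinity>" using Fa_fin c by auto
  have "ennreal t < ennreal (G c)" unfolding G_def using X(3)[of c] c f by simp
  moreover have "0 \<le> G c" unfolding G_def by simp
  ultimately have "t < G c" by (cases "0 \<le> t") (auto simp: ennreal_less_iff)
  then show ?thesis using c by auto
qed

lemma G_a: "G a = 0" unfolding G_def using Fa_a by simp

lemma G_inv: assumes t: "t > 0" shows "\<exists>!x\<in>{0<..<a}. G x = t"
proof -
  obtain c where c: "0 < c" "c < a" "t < G c" using G_big by auto
  have "continuous_on {c..a} G" using G_cont by (rule continuous_on_subset) (use c in auto)
  then obtain x where x: "c \<le> x" "x \<le> a" "G x = t"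
    using IVT2'[of G a t c] c t G_a by auto
  have "x \<noteq> a" using x G_a t by auto
  then have xin: "x \<in> {0<..<a}" using x c by auto
  show ?thesis
  proof (rule ex1I[of _ x])
    show "x \<in> {0<..<a} \<and> G x = t" using xin x by auto
    fix y assume y: "y \<in> {0<..<a} \<and> G y = t"
    show "y = x"
    proof (rule ccontr)
      assume "y \<noteq> x"
      then have "y < x \<or> x < y" by auto
      then show False using G_strict[of y x] G_strict[of x y] xin y x by auto
    qed
  qed
qed

lemma G_inj: "inj_on G {0<..a}"
proof (rule inj_onI)
  fix x y assume "x \<in> {0<..a}" "y \<in> {0<..a}" "G x = G y"
  then show "x = y" using G_strict[of x y] G_strict[of y x] by (cases x y rule: linorder_cases) auto
qed

lemma G_bound: assumes x: "0 < x" "x \<le> a" and n: "t \<le> G x" and t: "0 < t"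
  shows "x \<le> the_inv_into {0<..a} G t"
proof -
  obtain y where y: "y \<in> {0<..<a}" "G y = t" using G_inv[OF t] by auto
  have e: "the_inv_into {0<..a} G t = y" using y by (intro the_inv_into_f_eq G_inj) auto
  show ?thesis
  proof (rule ccontr)
    assume "\<not> x \<le> the_inv_into {0<..a} G t"
    then have "y < x" using e by auto
    then have "G x < G y" using G_strict[of y x] y x by auto
    then show False using n y by auto
  qed
qed

end

locale mk =
  fixes M :: "'a measure" and P :: "'a \<Rightarrow> 'a measure"
  assumes M: "prob_space M" and P: "invariant_markov_kernel M P"
begin

lemma Pprob: "P \<in> M \<rightarrow>\<^sub>M prob_algebra M"
  using P unfolding invariant_markov_kernel_def by auto

lemma Pmeas: "P \<in> M \<rightarrow>\<^sub>M subprob_algebra M"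
  using Pprob by (rule measurable_prob_algebraD)

lemma bindMP: "bind M P = M"
  using P unfolding invariant_markov_kernel_def by auto

lemma Px: "x \<in> space M \<Longrightarrow> prob_space (P x) \<and> sets (P x) = sets M"
  using measurable_space[OF Pprob] by (auto simp: space_prob_algebra)

lemma nn_bind: "h \<in> borel_measurable M \<Longrightarrow> (\<integral>\<^sup>+x. h x \<partial>M) = (\<integral>\<^sup>+x. \<integral>\<^sup>+y. h y \<partial>P x \<partial>M)"
  using nn_integral_bind[OF _ Pmeas, of h] by (simp add: bindMP)

lemma kop_meas: "f \<in> borel_measurable M \<Longrightarrow> kop P f \<in> borel_measurable M"
  unfolding kop_def
  by (rule measurable_compose[OF Pmeas integral_measurable_subprob_algebra])

lemma int_bind_nonneg:
  assumes h: "integrable M h" and nn: "\<And>x. 0 \<le> h x"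
  shows "(AE x in M. integrable (P x) h) \<and> integrable M (kop P h) \<and> integral\<^sup>L M (kop P h) = integral\<^sup>L M h"
proof -
  have hm: "h \<in> borel_measurable M" using h by auto
  have e1: "(\<integral>\<^sup>+x. ennreal (h x) \<partial>M) = ennreal (integral\<^sup>L M h)"
    using h nn by (intro nn_integral_eq_integral) auto
  have e2: "(\<integral>\<^sup>+x. \<integral>\<^sup>+y. ennreal (h y) \<partial>P x \<partial>M) = ennreal (integral\<^sup>L M h)"
    using e1 nn_bind[of "\<lambda>x. ennreal (h x)"] hm by simp
  have im: "(\<lambda>x. \<integral>\<^sup>+y. ennreal (h y) \<partial>P x) \<in> borel_measurable M"
    by (rule measurable_compose[OF Pmeas nn_integral_measurable_subprob_algebra]) (use hm in auto)
  have "AE x in M. (\<integral>\<^sup>+y. ennreal (h y) \<partial>P x) \<noteq> \<infinity>"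
    by (rule nn_integral_PInf_AE[OF im]) (simp add: e2)
  then have ae: "AE x in M. integrable (P x) h \<and> (\<integral>\<^sup>+y. ennreal (h y) \<partial>P x) = ennreal (kop P h x)"
  proof (rule AE_mp[OF _ AE_I2], intro impI)
    fix x assume x: "x \<in> space M" and fin: "(\<integral>\<^sup>+y. ennreal (h y) \<partial>P x) \<noteq> \<infinity>"
    have hmx: "h \<in> borel_measurable (P x)"
      using hm Px[OF x] by (simp cong: measurable_cong_sets)
    have ix: "integrable (P x) h"
      using fin nn hmx by (intro integrableI_bounded) (auto simp: top.not_eq_extremum)
    then show "integrable (P x) h \<and> (\<integral>\<^sup>+y. ennreal (h y) \<partial>P x) = ennreal (kop P h x)"
      unfolding kop_def using nn by (auto intro: nn_integral_eq_integral)
  qed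
  have knn: "\<And>x. 0 \<le> kop P h x" unfolding kop_def using nn by (simp add: integral_nonneg)
  have e3: "(\<integral>\<^sup>+x. ennreal (kop P h x) \<partial>M) = ennreal (integral\<^sup>L M h)"
    using e2 ae by (subst nn_integral_cong_AE[where v="\<lambda>x. \<integral>\<^sup>+y. ennreal (h y) \<partial>P x"]) auto
  have ik: "integrable M (kop P h)"
    using e3 knn kop_meas[OF hm] by (intro integrableI_nonneg) auto
  have "integral\<^sup>L M (kop P h) = enn2real (ennreal (integral\<^sup>L M h))"
    using ik knn e3 by (subst integral_eq_nn_integral) auto
  also have "\<dots> = integral\<^sup>L M h" using nn by (simp add: integral_nonneg)
  finally show ?thesis using ae ik by auto
qed

lemma int_bind:
  assumes f: "integrable M f"
  shows "(AE x in M. integrable (P x) f) \<and> integrable M (kop P f) \<and> integral\<^sup>L M (kop P f) = integral\<^sup>L M f"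
proof -
  define fp where "fp = (\<lambda>x. max 0 (f x))"
  define fn where "fn = (\<lambda>x. max 0 (- f x))"
  have ip: "integrable M fp" and ineg: "integrable M fn" using f unfolding fp_def fn_def by auto
  have fpn: "f = (\<lambda>x. fp x - fn x)" unfolding fp_def fn_def by auto
  note A = int_bind_nonneg[OF ip] int_bind_nonneg[OF ineg]
  have A1: "AE x in M. integrable (P x) fp" "integrable M (kop P fp)" "integral\<^sup>L M (kop P fp) = integral\<^sup>L M fp"
    using A(1) unfolding fp_def by auto
  have A2: "AE x in M. integrable (P x) fn" "integrable M (kop P fn)" "integral\<^sup>L M (kop P fn) = integral\<^sup>L M fn"
    using A(2) unfolding fn_def by auto
  have ae: "AE x in M. integrable (P x) f \<and> kop P f x = kop P fp x - kop P fn x"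
    using A1(1) A2(1) by eventually_elim (auto simp: kop_def fpn)
  have fm: "f \<in> borel_measurable M" using f by auto
  have ae2: "AE x in M. kop P fp x - kop P fn x = kop P f x" using ae by eventually_elim auto
  have ik: "integrable M (kop P f)"
    by (rule integrable_cong_AE_imp[OF _ kop_meas[OF fm] ae2]) (use A1(2) A2(2) in auto)
  have "integral\<^sup>L M (kop P f) = integral\<^sup>L M (\<lambda>x. kop P fp x - kop P fn x)"
    using ae2 A1(2) A2(2) by (intro integral_cong_AE) (auto simp: kop_meas fm eq_commute)
  also have "\<dots> = integral\<^sup>L M fp - integral\<^sup>L M fn" using A1 A2 by simp
  also have "\<dots> = integral\<^sup>L M f" using ip ineg by (simp add: fpn)
  finally show ?thesis using ae ik by auto
qed

lemma L2_int: "f \<in> L2 M \<Longrightarrow> integrable M f"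
  unfolding L2_def using prob_space.finite_measure[OF M]
  by (auto intro: finite_measure.square_integrable_imp_integrable)

lemma L2_mult: assumes "f \<in> L2 M" "g \<in> L2 M" shows "integrable M (\<lambda>x. f x * g x)"
proof (rule Bochner_Integration.integrable_bound[of _ "\<lambda>x. (f x)\<^sup>2 + (g x)\<^sup>2"])
  show "integrable M (\<lambda>x. (f x)\<^sup>2 + (g x)\<^sup>2)" using assms unfolding L2_def by auto
  show "(\<lambda>x. f x * g x) \<in> borel_measurable M" using assms unfolding L2_def by auto
  show "AE x in M. norm (f x * g x) \<le> norm ((f x)\<^sup>2 + (g x)\<^sup>2)"
  proof (rule AE_I2)
    fix x
    have h0: "0 \<le> (\<bar>f x\<bar> - \<bar>g x\<bar>)\<^sup>2" by simp
    have h1: "(\<bar>f x\<bar> - \<bar>g x\<bar>)\<^sup>2 = (f x)\<^sup>2 + (g x)\<^sup>2 - 2 * \<bar>f x * g x\<bar>"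
      by (simp add: power2_diff abs_mult)
    have "\<bar>f x * g x\<bar> \<le> (f x)\<^sup>2 + (g x)\<^sup>2" using h0 h1 by simp
    then show "norm (f x * g x) \<le> norm ((f x)\<^sup>2 + (g x)\<^sup>2)" by simp
  qed
qed

lemma jensen_sq:
  fixes f :: "'b \<Rightarrow> real"
  assumes "prob_space N" "integrable N f" "integrable N (\<lambda>x. (f x)\<^sup>2)"
  shows "(integral\<^sup>L N f)\<^sup>2 \<le> integral\<^sup>L N (\<lambda>x. (f x)\<^sup>2)"
proof -
  interpret prob_space N by fact
  have "0 \<le> (\<integral>x. (f x - integral\<^sup>L N f)\<^sup>2 \<partial>N)" by (rule Bochner_Integration.integral_nonneg_AE) simp
  then show ?thesis using variance_eq[OF assms(2,3)] by linarith
qed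

lemma kop_L2:
  assumes f: "f \<in> L2 M"
  shows "kop P f \<in> L2 M \<and> norm2_L2 M (kop P f) \<le> norm2_L2 M f \<and> mean M (kop P f) = mean M f"
proof -
  have fi: "integrable M f" by (rule L2_int[OF f])
  have fm: "f \<in> borel_measurable M" using fi by auto
  have f2: "integrable M (\<lambda>x. (f x)\<^sup>2)" using f unfolding L2_def by auto
  note B1 = int_bind[OF fi]
  note B2 = int_bind_nonneg[OF f2, simplified]
  have ae: "AE x in M. (kop P f x)\<^sup>2 \<le> kop P (\<lambda>x. (f x)\<^sup>2) x"
    using B1 B2
  proof -
    have "AE x in M. integrable (P x) f \<and> integrable (P x) (\<lambda>x. (f x)\<^sup>2)" using B1 B2 by auto
    then show ?thesis
    proof (rule AE_mp[OF _ AE_I2], intro impI)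
      fix x assume x: "x \<in> space M" and "integrable (P x) f \<and> integrable (P x) (\<lambda>x. (f x)\<^sup>2)"
      then show "(kop P f x)\<^sup>2 \<le> kop P (\<lambda>x. (f x)\<^sup>2) x"
        unfolding kop_def using Px[OF x] by (intro jensen_sq) auto
    qed
  qed
  have km: "kop P f \<in> borel_measurable M" by (rule kop_meas[OF fm])
  have k2: "integrable M (\<lambda>x. (kop P f x)\<^sup>2)"
  proof (rule Bochner_Integration.integrable_bound[OF conjunct1[OF conjunct2[OF B2]]])
    show "(\<lambda>x. (kop P f x)\<^sup>2) \<in> borel_measurable M" using km by auto
    show "AE x in M. norm ((kop P f x)\<^sup>2) \<le> norm (kop P (\<lambda>x. (f x)\<^sup>2) x)"
      using ae by eventually_elim auto
  qed
  have kL2: "kop P f \<in> L2 M" unfolding L2_def using km k2 by auto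
  have "norm2_L2 M (kop P f) = integral\<^sup>L M (\<lambda>x. (kop P f x)\<^sup>2)"
    unfolding norm2_L2_def inner_L2_def by (simp add: power2_eq_square)
  also have "\<dots> \<le> integral\<^sup>L M (kop P (\<lambda>x. (f x)\<^sup>2))"
    using k2 B2 ae by (intro integral_mono_AE) auto
  also have "\<dots> = integral\<^sup>L M (\<lambda>x. (f x)\<^sup>2)" using B2 by auto
  also have "\<dots> = norm2_L2 M f"
    unfolding norm2_L2_def inner_L2_def by (simp add: power2_eq_square)
  finally show ?thesis using kL2 B1 unfolding mean_def by auto
qed

lemma dirichlet_eq:
  assumes f: "f \<in> L2 M" and Ps: "is_L2_adjoint M (kop P) Pstar"
  shows "dirichlet M (\<lambda>g. Pstar (kop P g)) f = norm2_L2 M f - norm2_L2 M (kop P f)"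
proof -
  have kf: "kop P f \<in> L2 M" using kop_L2[OF f] by auto
  have pk: "Pstar (kop P f) \<in> L2 M" and adj: "inner_L2 M (Pstar (kop P f)) f = inner_L2 M (kop P f) (kop P f)"
    using Ps kf f unfolding is_L2_adjoint_def by auto
  have "dirichlet M (\<lambda>g. Pstar (kop P g)) f = (\<integral>x. f x * f x - Pstar (kop P f) x * f x \<partial>M)"
    unfolding dirichlet_def inner_L2_def by (simp add: left_diff_distrib)
  also have "\<dots> = inner_L2 M f f - inner_L2 M (Pstar (kop P f)) f"
    unfolding inner_L2_def using L2_mult[OF f f] L2_mult[OF pk f] by simp
  finally show ?thesis using adj unfolding norm2_L2_def by simp
qed

lemma iter_L2:
  assumes f: "f \<in> L2_0 M"
  shows "(kop P ^^ n) f \<in> L2_0 M \<and> norm2_L2 M ((kop P ^^ Suc n) f) \<le> norm2_L2 M ((kop P ^^ n) f)"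
proof (induction n)
  case 0
  then show ?case using kop_L2[of f] f unfolding L2_0_def by auto
next
  case (Suc n)
  then have "(kop P ^^ Suc n) f \<in> L2_0 M" using kop_L2[of "(kop P ^^ n) f"] unfolding L2_0_def by auto
  then show ?case using kop_L2[of "(kop P ^^ Suc n) f"] unfolding L2_0_def by auto
qed

end

theorem theorem8:
  fixes M :: "'a measure" and P :: "'a \<Rightarrow> 'a measure"
    and Pstar :: "('a \<Rightarrow> real) \<Rightarrow> ('a \<Rightarrow> real)"
    and \<Phi> :: "('a \<Rightarrow> real) \<Rightarrow> ennreal"
    and \<beta> :: "real \<Rightarrow> real" and a :: real
  assumes M: "prob_space M"
    and P: "invariant_markov_kernel M P"
    and Pstar: "is_L2_adjoint M (kop P) Pstar"
    and \<Phi>_ae: "\<And>f g. f \<in> L2 M \<Longrightarrow> g \<in> L2 M \<Longrightarrow> (AE x in M. f x = g x) \<Longrightarrow> \<Phi> f = \<Phi> g"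
    and \<Phi>_hom: "\<And>f c. f \<in> L2 M \<Longrightarrow> c > 0 \<Longrightarrow> \<Phi> (\<lambda>x. c * f x) = ennreal (c\<^sup>2) * \<Phi> f"
    and \<Phi>_contr: "\<And>f n. f \<in> L2 M \<Longrightarrow> n \<ge> 1 \<Longrightarrow> \<Phi> ((kop P ^^ n) f) \<le> \<Phi> f"
    and a_def: "ennreal a = (SUP f \<in> {f \<in> L2_0 M. norm2_L2 M f > 0}. ennreal (norm2_L2 M f) / \<Phi> f)"
    and a_pos: "0 < a"
    and \<Phi>_poinc: "\<And>f. f \<in> L2 M \<Longrightarrow>
        ennreal (norm2_L2 M (\<lambda>x. f x - mean M f)) \<le> ennreal a * \<Phi> (\<lambda>x. f x - mean M f)"
    and \<beta>_nonneg: "\<And>s. s > 0 \<Longrightarrow> \<beta> s \<ge> 0"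
    and \<beta>_decr: "\<And>s t. 0 < s \<Longrightarrow> s \<le> t \<Longrightarrow> \<beta> t \<le> \<beta> s"
    and \<beta>_lim: "(\<beta> \<longlongrightarrow> 0) at_top"
    and WPI: "\<And>f s. f \<in> L2_0 M \<Longrightarrow> s > 0 \<Longrightarrow>
        ennreal (norm2_L2 M f)
          \<le> ennreal (s * dirichlet M (\<lambda>g. Pstar (kop P g)) f) + ennreal (\<beta> s) * \<Phi> f"
  shows "continuous_on {0<..a} (\<lambda>x. enn2real (Fa \<beta> a x))
    \<and> (\<forall>x \<in> {0<..a}. Fa \<beta> a x < \<infinity>)
    \<and> convex_on {0<..a} (\<lambda>x. enn2real (Fa \<beta> a x))
    \<and> (\<forall>x y. 0 < x \<longrightarrow> x < y \<longrightarrow> y \<le> a \<longrightarrow> enn2real (Fa \<beta> a y) < enn2real (Fa \<beta> a x))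
    \<and> ((Fa \<beta> a) \<longlongrightarrow> \<infinity>) (at_right 0)
    \<and> (\<forall>t > 0. \<exists>!x \<in> {0<..<a}. enn2real (Fa \<beta> a x) = t)
    \<and> (\<forall>f n. f \<in> L2_0 M \<longrightarrow> 0 < \<Phi> f \<longrightarrow> \<Phi> f < \<infinity> \<longrightarrow> n \<ge> 1 \<longrightarrow>
         ennreal (norm2_L2 M ((kop P ^^ n) f))
           \<le> \<Phi> f * ennreal (the_inv_into {0<..a} (\<lambda>x. enn2real (Fa \<beta> a x)) (real n)))"
proof -
  interpret mk M P by (simp add: mk_def M P)
  have big: "\<exists>s>0. v \<le> \<beta> s" if v: "0 < v" "v < a" for v
  proof -
    have "ennreal v < ennreal a" using v by (simp add: ennreal_lessI)
    then obtain f where f: "f \<in> L2_0 M" "norm2_L2 M f > 0" and lt: "ennreal v < ennreal (norm2_L2 M f) / \<Phi> f"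
      unfolding a_def by (auto simp: less_SUP_iff)
    define N where "N = norm2_L2 M f"
    have N: "N > 0" using f N_def by auto
    have le: "ennreal N / \<Phi> f \<le> ennreal a" unfolding a_def N_def using f by (intro SUP_upper) auto
    have P0: "\<Phi> f \<noteq> 0" using le N by (auto simp: ennreal_divide_zero top_unique)
    have Pt: "\<Phi> f \<noteq> top" using lt by auto
    obtain \<phi> where ph: "\<Phi> f = ennreal \<phi>" "\<phi> > 0" using P0 Pt
      by (cases "\<Phi> f") (auto simp: ennreal_less_zero_iff)
    have "ennreal v < ennreal (N / \<phi>)" using lt ph N unfolding N_def by (simp add: divide_ennreal)
    then have "v < N / \<phi>" using v by (simp add: ennreal_less_iff)
    then have vN: "v * \<phi> < N" using ph by (simp add: field_simps)
    define D where "D = dirichlet M (\<lambda>g. Pstar (kop P g)) f"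
    define s where "s = min 1 ((N - v * \<phi>) / (2 * (\<bar>D\<bar> + 1)))"
    have s: "s > 0" unfolding s_def using vN by auto
    have sD: "s * (\<bar>D\<bar> + 1) \<le> (N - v * \<phi>) / 2"
    proof -
      have "s \<le> (N - v * \<phi>) / (2 * (\<bar>D\<bar> + 1))" unfolding s_def by simp
      then have "s * (\<bar>D\<bar> + 1) \<le> (N - v * \<phi>) / (2 * (\<bar>D\<bar> + 1)) * (\<bar>D\<bar> + 1)"
        by (intro mult_right_mono) auto
      also have "\<dots> = (N - v * \<phi>) / 2" by (simp add: field_simps)
      finally show ?thesis .
    qed
    define q where "q = max 0 (s * D)"
    have q: "q \<le> (N - v * \<phi>) / 2"
    proof -
      have "s * D \<le> s * (\<bar>D\<bar> + 1)" using s by (intro mult_left_mono) auto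
      moreover have "0 \<le> s * (\<bar>D\<bar> + 1)" using s by auto
      ultimately show ?thesis unfolding q_def using sD by auto
    qed
    have bs: "0 \<le> \<beta> s" using \<beta>_nonneg s by auto
    have "ennreal N \<le> ennreal (s * D) + ennreal (\<beta> s) * \<Phi> f"
      using WPI[OF f(1) s] unfolding N_def D_def .
    also have "\<dots> \<le> ennreal q + ennreal (\<beta> s) * ennreal \<phi>"
      unfolding ph q_def by (intro add_mono ennreal_leI) auto
    also have "\<dots> = ennreal (q + \<beta> s * \<phi>)"
      using bs ph q_def by (simp add: ennreal_mult ennreal_plus)
    finally have "N \<le> q + \<beta> s * \<phi>"
      using bs ph q_def by (subst (asm) ennreal_le_iff) auto
    moreover have "2 * q \<le> N - v * \<phi>" using q by simp
    ultimately have "v * \<phi> < \<beta> s * \<phi>" using vN by linarith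
    then have "v < \<beta> s" using ph by simp
    then show ?thesis using s by auto
  qed
  interpret wb \<beta> a
    using \<beta>_nonneg \<beta>_decr \<beta>_lim a_pos big by unfold_locales auto
  have Geq: "(\<lambda>x. enn2real (Fa \<beta> a x)) = G" by (simp add: fun_eq_iff G_def)
  have part7: "ennreal (norm2_L2 M ((kop P ^^ n) f))
           \<le> \<Phi> f * ennreal (the_inv_into {0<..a} G (real n))"
    if f: "f \<in> L2_0 M" and p0: "0 < \<Phi> f" and pt: "\<Phi> f < \<infinity>" and n: "n \<ge> 1" for f n
  proof -
    obtain \<phi> where ph: "\<Phi> f = ennreal \<phi>" "\<phi> > 0" using p0 pt
      by (cases "\<Phi> f") (auto simp: ennreal_less_zero_iff)
    define N where "N = (\<lambda>k. norm2_L2 M ((kop P ^^ k) f))"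
    define x where "x = (\<lambda>k. N k / \<phi>)"
    have fk: "(kop P ^^ k) f \<in> L2_0 M" for k using iter_L2[OF f] by auto
    have Ndec: "N (Suc k) \<le> N k" for k using iter_L2[OF f] unfolding N_def by auto
    have Nnn: "0 \<le> N k" for k unfolding N_def norm2_L2_def inner_L2_def by simp
    have fL2: "f \<in> L2 M" using f unfolding L2_0_def by auto
    have Phk: "\<Phi> ((kop P ^^ k) f) \<le> \<Phi> f" for k
      using \<Phi>_contr[OF fL2, of k] by (cases k) auto
    have x0: "x 0 \<le> a"
    proof -
      have mf: "mean M f = 0" using f unfolding L2_0_def by auto
      have "ennreal (N 0) \<le> ennreal a * ennreal \<phi>"
        using \<Phi>_poinc[OF fL2] ph(1) unfolding mf N_def by simp
      also have "\<dots> = ennreal (a * \<phi>)" using a_pos ph by (simp add: ennreal_mult)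
      finally have "N 0 \<le> a * \<phi>" using a_pos ph by (subst (asm) ennreal_le_iff) auto
      then show ?thesis unfolding x_def using ph by (simp add: field_simps)
    qed
    have xdec: "x (Suc k) \<le> x k" for k unfolding x_def using Ndec[of k] ph by (simp add: divide_right_mono)
    have xnn: "0 \<le> x k" for k unfolding x_def using Nnn[of k] ph by simp
    have xa: "x k \<le> a" for k
      by (induction k) (use x0 xdec order_trans in blast)+
    have Kst: "Kstar \<beta> (x k) \<le> ennreal (x k - x (Suc k))" for k
      unfolding Kstar_def
    proof (rule SUP_least, rule ennreal_leI)
      fix u :: real assume "u \<in> {0..}"
      then have u: "0 \<le> u" by simp
      show "u * x k - Kfun \<beta> u \<le> x k - x (Suc k)"
      proof (cases "u = 0")
        case True then show ?thesis using xdec[of k] by (simp add: Kfun_def)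
      next
        case False
        then have u: "0 < u" using u by simp
        define s where "s = 1 / u"
        have s: "0 < s" "1 / u = s" "u = 1 / s" using u unfolding s_def by auto
        have bs: "0 \<le> \<beta> s" using \<beta>_nonneg s by auto
        have de: "dirichlet M (\<lambda>g. Pstar (kop P g)) ((kop P ^^ k) f) = N k - N (Suc k)"
          unfolding N_def using dirichlet_eq[OF _ Pstar, of "(kop P ^^ k) f"] fk[of k]
          by (simp add: L2_0_def)
        have "ennreal (N k) \<le> ennreal (s * (N k - N (Suc k))) + ennreal (\<beta> s) * \<Phi> ((kop P ^^ k) f)"
          using WPI[OF fk[of k] s(1)] unfolding de N_def .
        also have "\<dots> \<le> ennreal (s * (N k - N (Suc k))) + ennreal (\<beta> s) * ennreal \<phi>"
          using Phk[of k] unfolding ph by (intro add_mono mult_left_mono) auto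
        also have "\<dots> = ennreal (s * (N k - N (Suc k)) + \<beta> s * \<phi>)"
          using bs ph s Ndec[of k] by (simp add: ennreal_mult ennreal_plus)
        finally have "N k \<le> s * (N k - N (Suc k)) + \<beta> s * \<phi>"
          using bs ph s Ndec[of k] by (subst (asm) ennreal_le_iff) auto
        then have "u * N k \<le> u * (s * (N k - N (Suc k)) + \<beta> s * \<phi>)"
          using u by (intro mult_left_mono) auto
        also have "\<dots> = (N k - N (Suc k)) + u * \<beta> s * \<phi>"
          using s u by (simp add: algebra_simps)
        finally have "u * N k / \<phi> \<le> ((N k - N (Suc k)) + u * \<beta> s * \<phi>) / \<phi>"
          using ph by (intro divide_right_mono) auto
        also have "\<dots> = x k - x (Suc k) + u * \<beta> s"
          unfolding x_def using ph by (simp add: field_simps)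
        finally have "u * x k \<le> x k - x (Suc k) + u * \<beta> s"
          unfolding x_def by simp
        then show ?thesis unfolding Kfun_def using False s by simp
      qed
    qed
    have claim: "x k = 0 \<or> (0 < x k \<and> real k \<le> G (x k))" for k
    proof (induction k)
      case 0
      then show ?case using xnn[of 0] by (auto simp: G_def)
    next
      case (Suc k)
      show ?case
      proof (cases "x (Suc k) = 0")
        case False
        then have p: "0 < x (Suc k)" using xnn[of "Suc k"] by simp
        then have pk: "0 < x k" using xdec[of k] by simp
        have "G (x k) + 1 \<le> G (x (Suc k))"
          using G_step[OF p xdec[of k] xa[of k] Kst[of k]] .
        then show ?thesis using Suc pk p by auto
      qed simp
    qed
    show ?thesis
    proof (cases "x n = 0")
      case True
      then have "N n = 0" unfolding x_def using ph by simp
      then show ?thesis unfolding N_def by simp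
    next
      case False
      then have xn: "0 < x n" "real n \<le> G (x n)" using claim[of n] by auto
      have xi: "x n \<le> the_inv_into {0<..a} G (real n)"
        using G_bound[OF xn(1) xa[of n] xn(2)] n by simp
      then have "\<phi> * x n \<le> \<phi> * the_inv_into {0<..a} G (real n)" using ph by simp
      moreover have "N n = \<phi> * x n" unfolding x_def using ph by simp
      ultimately have "ennreal (N n) \<le> ennreal (\<phi> * the_inv_into {0<..a} G (real n))"
        by (intro ennreal_leI) simp
      also have "\<dots> = \<Phi> f * ennreal (the_inv_into {0<..a} G (real n))"
        unfolding ph using ph xn xi by (intro ennreal_mult) auto
      finally show ?thesis unfolding N_def .
    qed
  qed
  have c1: "continuous_on {0<..a} G" by (rule G_cont)
  have c2: "\<forall>x \<in> {0<..a}. Fa \<beta> a x < \<infinity>" using Fa_fin by auto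
  have c3: "convex_on {0<..a} G" by (rule G_convex)
  have c4: "\<forall>x y. 0 < x \<longrightarrow> x < y \<longrightarrow> y \<le> a \<longrightarrow> enn2real (Fa \<beta> a y) < enn2real (Fa \<beta> a x)"
    using G_strict unfolding G_def by blast
  have c5: "((Fa \<beta> a) \<longlongrightarrow> \<infinity>) (at_right 0)" using Fa_lim by simp
  have c6: "\<forall>t > 0. \<exists>!x \<in> {0<..<a}. enn2real (Fa \<beta> a x) = t" using G_inv unfolding G_def by blast
  have c7: "\<forall>f n. f \<in> L2_0 M \<longrightarrow> 0 < \<Phi> f \<longrightarrow> \<Phi> f < \<infinity> \<longrightarrow> n \<ge> 1 \<longrightarrow>
         ennreal (norm2_L2 M ((kop P ^^ n) f))
           \<le> \<Phi> f * ennreal (the_inv_into {0<..a} G (real n))" using part7 by blast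
  show ?thesis unfolding Geq by (intro conjI c1 c2 c3 c4 c5 c6 c7)
qed

end
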